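(* A set $S$ of points of $PG(3,2)$ is a strong blocking set of size $9$ if and only if $S$ is a hyperbolic quadric $Q^{+}(3,2)$. That is, the minimal strong blocking sets of $PG(3,2)$ are exactly the hyperbolic quadrics $Q^{+}(3,2)$.
   Context: $PG(3,2)$ is the $3$-dimensional projective space over $\mathbb{F}_2$. A strong blocking set in $PG(3,2)$ is a set of points $S$ such that for every plane $\sigma$, the span $\langle \sigma\cap S\rangle$ equals $\sigma$; the minimum possible size of such a set is $9$, and a strong blocking set of size $9$ is called a minimal strong blocking set. A hyperbolic quadric $Q^{+}(3,2)$ is the set of points of $PG(3,2)$ which is the zero set of a non-degenerate quadratic form of hyperbolic type, i.e. a point set projectively equivalent to $\{(x_0:x_1:x_2:x_3): x_0x_1+x_2x_3=0\}$ (it has $9$ points). *)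

theory Defs
  imports "HOL-Analysis.Analysis" "HOL-Library.Z2"
begin

text \<open>PG(3,2): points are the nonzero vectors of the vector space bit^4 over the
  field F_2 (type bit); over F_2 each projective point has a unique nonzero
  representative. Subspaces of PG(3,2) correspond to linear subspaces of bit^4.\<close>

type_synonym pt = "bit ^ 4"

definition pg_points :: "pt set" where
  "pg_points = UNIV - {0}"

definition is_plane :: "pt set \<Rightarrow> bool" where
  "is_plane W \<longleftrightarrow> vec.subspace W \<and> vec.dim W = 3"

definition strong_blocking_set :: "pt set \<Rightarrow> bool" where
  "strong_blocking_set S \<longleftrightarrow> S \<subseteq> pg_points \<and>
     (\<forall>W. is_plane W \<longrightarrow> vec.span (S \<inter> W) = W)"

definition hyp_form :: "pt \<Rightarrow> bit" where
  "hyp_form y = y$0 * y$1 + y$2 * y$3"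

definition hyperbolic_quadric :: "pt set \<Rightarrow> bool" where
  "hyperbolic_quadric S \<longleftrightarrow>
     (\<exists>A :: bit^4^4. invertible A \<and> S = {x \<in> pg_points. hyp_form (A *v x) = 0})"

end

theory Submission
  imports Defs
begin


lemma add_self_pt [simp]: "(x::pt) + x = 0"
  by (simp add: vec_eq_iff)

lemma add_self2_pt [simp]: "(x::pt) + (x + y) = y"
  by (simp add: add.assoc[symmetric])

lemma eq_iff_sum0: "((x::pt) = y) \<longleftrightarrow> x + y = 0"
  by (metis add_self2_pt add_0_right add.commute)

lemma bit_cases2: "(c::bit) = 0 \<or> c = 1" by auto

lemma subspace_pt: "vec.subspace (T::pt set) \<longleftrightarrow> 0 \<in> T \<and> (\<forall>x\<in>T. \<forall>y\<in>T. x + y \<in> T)"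
proof
  assume "0 \<in> T \<and> (\<forall>x\<in>T. \<forall>y\<in>T. x + y \<in> T)"
  then show "vec.subspace T"
    apply (intro vec.subspaceI)
    apply auto
    subgoal for c x by (cases c) auto
    done
qed (auto simp: vec.subspace_def)

definition E3 :: "pt \<Rightarrow> pt \<Rightarrow> pt \<Rightarrow> pt set" where
  "E3 a b c = {0,a,b,c,a+b,a+c,b+c,a+b+c}"

lemma E3_subspace: "vec.subspace (E3 a b c)"
  unfolding subspace_pt E3_def
  by (simp add: ac_simps)



lemma span3: "vec.span {a,b,c} = E3 a b c"
proof
  show "vec.span {a,b,c} \<subseteq> E3 a b c"
    by (rule vec.span_minimal[OF _ E3_subspace]) (auto simp: E3_def)
  show "E3 a b c \<subseteq> vec.span {a,b,c}"
  proof -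
    have "a \<in> vec.span {a,b,c}" "b \<in> vec.span {a,b,c}" "c \<in> vec.span {a,b,c}"
      by (simp_all add: vec.span_base)
    then show ?thesis by (simp add: E3_def vec.span_add vec.span_zero)
  qed
qed

lemma sum3: "a \<noteq> b \<Longrightarrow> a \<noteq> c \<Longrightarrow> b \<noteq> c \<Longrightarrow> (\<Sum>v\<in>{a,b,c}. f v) = f a + f b + (f c :: pt)"
  by (simp add: ac_simps)

lemma indep3:
  fixes a b c :: pt
  assumes d: "a \<noteq> b" "a \<noteq> c" "b \<noteq> c"
  shows "vec.independent {a,b,c} \<longleftrightarrow> a \<noteq> 0 \<and> b \<noteq> 0 \<and> c \<noteq> 0 \<and> a + b + c \<noteq> 0"
proof -
  have "vec.dependent {a,b,c} \<longleftrightarrow> (\<exists>u. (\<exists>v \<in> {a,b,c}. u v \<noteq> 0) \<and> u a *s a + u b *s b + u c *s c = 0)"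
  proof -
    have "\<And>u :: pt \<Rightarrow> bit. (\<Sum>v\<in>{a,b,c}. u v *s v) = u a *s a + u b *s b + u c *s c"
      using d by (simp add: ac_simps)
    then show ?thesis using vec.dependent_finite[of "{a,b,c}"] by simp
  qed
  also have "\<dots> \<longleftrightarrow> \<not> (a \<noteq> 0 \<and> b \<noteq> 0 \<and> c \<noteq> 0 \<and> a + b + c \<noteq> 0)"
  proof
    assume "\<exists>u. (\<exists>v \<in> {a,b,c}. u v \<noteq> 0) \<and> u a *s a + u b *s b + u c *s c = 0"
    then obtain u where u: "(\<exists>v \<in> {a,b,c}. u v \<noteq> 0)" "u a *s a + u b *s b + u c *s c = 0" by blast
    show "\<not> (a \<noteq> 0 \<and> b \<noteq> 0 \<and> c \<noteq> 0 \<and> a + b + c \<noteq> 0)"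
    proof -
      have s: "a + b \<noteq> 0" "a + c \<noteq> 0" "b + c \<noteq> 0" using d eq_iff_sum0 by blast+
      show ?thesis
      using u s bit_cases2[of "u a"] bit_cases2[of "u b"] bit_cases2[of "u c"]
      by (elim disjE) auto
    qed
  next
    assume h: "\<not> (a \<noteq> 0 \<and> b \<noteq> 0 \<and> c \<noteq> 0 \<and> a + b + c \<noteq> 0)"
    show "\<exists>u. (\<exists>v \<in> {a,b,c}. u v \<noteq> 0) \<and> u a *s a + u b *s b + u c *s c = 0"
    proof (cases "a + b + c = 0")
      case True
      then show ?thesis by (rule_tac x="\<lambda>_. 1" in exI) auto
    next
      case False
      then have "a = 0 \<or> b = 0 \<or> c = 0" using h by blast
      then show ?thesis
        apply (elim disjE)
        subgoal by (rule_tac x="\<lambda>v. if v = a then 1 else 0" in exI) (simp add: d)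
        subgoal by (rule_tac x="\<lambda>v. if v = b then 1 else 0" in exI) (simp add: d d[symmetric])
        subgoal by (rule_tac x="\<lambda>v. if v = c then 1 else 0" in exI) (simp add: d d[symmetric])
        done
    qed
  qed
  finally show ?thesis by blast
qed



definition NF :: "pt set \<Rightarrow> bool" where
  "NF S \<longleftrightarrow> (\<forall>a b c. a \<noteq> 0 \<longrightarrow> b \<noteq> 0 \<longrightarrow> c \<noteq> 0 \<longrightarrow> a + b \<noteq> 0 \<longrightarrow> a + c \<noteq> 0 \<longrightarrow> b + c \<noteq> 0
      \<longrightarrow> a + b + c \<noteq> 0 \<longrightarrow> a \<in> S \<or> b \<in> S \<or> c \<in> S \<or> a + b + c \<in> S)"

definition good3 :: "pt \<Rightarrow> pt \<Rightarrow> pt \<Rightarrow> bool" where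
  "good3 a b c \<longleftrightarrow> a \<noteq> 0 \<and> b \<noteq> 0 \<and> c \<noteq> 0 \<and> a + b \<noteq> 0 \<and> a + c \<noteq> 0 \<and> b + c \<noteq> 0 \<and> a + b + c \<noteq> 0"

lemma fano:
  fixes A B C AB AC BC ABC :: bool
  assumes "C \<or> AC \<or> BC \<or> ABC"
    and "B \<or> AB \<or> BC \<or> ABC"
    and "A \<or> AB \<or> AC \<or> ABC"
    and "B \<or> C \<or> AB \<or> AC"
    and "A \<or> C \<or> AB \<or> BC"
    and "A \<or> B \<or> AC \<or> BC"
    and "A \<or> B \<or> C \<or> ABC"
    and "A \<Longrightarrow> B \<Longrightarrow> AB"
    and "A \<Longrightarrow> AB \<Longrightarrow> B"
    and "B \<Longrightarrow> AB \<Longrightarrow> A"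
    and "A \<Longrightarrow> C \<Longrightarrow> AC"
    and "A \<Longrightarrow> AC \<Longrightarrow> C"
    and "C \<Longrightarrow> AC \<Longrightarrow> A"
    and "B \<Longrightarrow> C \<Longrightarrow> BC"
    and "B \<Longrightarrow> BC \<Longrightarrow> C"
    and "C \<Longrightarrow> BC \<Longrightarrow> B"
    and "A \<Longrightarrow> BC \<Longrightarrow> ABC"
    and "A \<Longrightarrow> ABC \<Longrightarrow> BC"
    and "BC \<Longrightarrow> ABC \<Longrightarrow> A"
    and "B \<Longrightarrow> AC \<Longrightarrow> ABC"
    and "B \<Longrightarrow> ABC \<Longrightarrow> AC"
    and "AC \<Longrightarrow> ABC \<Longrightarrow> B"
    and "C \<Longrightarrow> AB \<Longrightarrow> ABC"
    and "C \<Longrightarrow> ABC \<Longrightarrow> AB"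
    and "AB \<Longrightarrow> ABC \<Longrightarrow> C"
    and "AB \<Longrightarrow> AC \<Longrightarrow> BC"
    and "AB \<Longrightarrow> BC \<Longrightarrow> AC"
    and "AC \<Longrightarrow> BC \<Longrightarrow> AB"
  shows "A \<and> B \<and> C"
  using assms by sat

lemma planeI:
  assumes "good3 a b c"
  shows "is_plane (E3 a b c)"
proof -
  have d: "a \<noteq> b" "a \<noteq> c" "b \<noteq> c" using assms unfolding good3_def by auto
  have i: "vec.independent {a,b,c}" using assms d indep3[OF d] unfolding good3_def by auto
  have "vec.dim (vec.span {a,b,c}) = 3"
    using vec.dim_span_eq_card_independent[OF i] d by simp
  then show ?thesis unfolding is_plane_def span3[symmetric] by simp
qed

lemma planeE:
  assumes "is_plane W"
  obtains a b c where "good3 a b c" "W = E3 a b c"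
proof -
  obtain B where B: "B \<subseteq> W" "vec.independent B" "W \<subseteq> vec.span B" "card B = vec.dim W"
    using vec.basis_exists by blast
  have "card B = 3" using B(4) assms unfolding is_plane_def by simp
  then obtain a b c where abc: "B = {a,b,c}" "a \<noteq> b" "b \<noteq> c" "a \<noteq> c"
    unfolding card_3_iff by blast
  have d: "a \<noteq> b" "a \<noteq> c" "b \<noteq> c" using abc by auto
  have "W = vec.span B"
    using B assms vec.span_subspace unfolding is_plane_def by blast
  then have W: "W = E3 a b c" using abc span3 by simp
  have s: "a + b \<noteq> 0" "a + c \<noteq> 0" "b + c \<noteq> 0" using d eq_iff_sum0 by blast+
  have "good3 a b c" using B(2) indep3[OF d] abc s unfolding good3_def by simp
  then show ?thesis using that W by blast
qed

lemma A1:
  assumes sb: "strong_blocking_set S"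
  shows "NF S"
  unfolding NF_def
proof (intro allI impI, rule ccontr)
  fix a b c :: pt
  assume nz: "a \<noteq> 0" "b \<noteq> 0" "c \<noteq> 0" "a + b \<noteq> 0" "a + c \<noteq> 0" "b + c \<noteq> 0" "a + b + c \<noteq> 0"
     and ns: "\<not> (a \<in> S \<or> b \<in> S \<or> c \<in> S \<or> a + b + c \<in> S)"
  let ?W = "E3 a b c"
  have pl: "is_plane ?W" using planeI nz unfolding good3_def by blast
  then have eq: "vec.span (S \<inter> ?W) = ?W" using sb unfolding strong_blocking_set_def by blast
  let ?L = "{0, a + b, a + c, b + c}"
  have Ls: "vec.subspace ?L" unfolding subspace_pt by (simp add: ac_simps)
  have "S \<inter> ?W \<subseteq> ?L" using ns unfolding E3_def by auto
  then have "vec.span (S \<inter> ?W) \<subseteq> ?L" using vec.span_minimal Ls by blast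
  moreover have "a \<in> ?W" unfolding E3_def by simp
  ultimately have "a \<in> ?L" using eq by blast
  moreover have "a \<noteq> b + c" using nz(7) eq_iff_sum0[of a "b + c"] by (simp add: ac_simps)
  ultimately show False using nz by auto
qed

lemma A2:
  assumes sub: "S \<subseteq> pg_points" and nf: "NF S"
  shows "strong_blocking_set S"
  unfolding strong_blocking_set_def
proof (intro conjI allI impI sub)
  fix W assume "is_plane W"
  then obtain a b c where g: "good3 a b c" and W: "W = E3 a b c" by (rule planeE)
  have nz: "a \<noteq> 0" "b \<noteq> 0" "c \<noteq> 0" "a + b \<noteq> 0" "a + c \<noteq> 0" "b + c \<noteq> 0" "a + (b + c) \<noteq> 0"
    using g unfolding good3_def by (simp_all add: ac_simps)
  define U where "U = vec.span (S \<inter> W)"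
  have Wsub: "vec.subspace W" unfolding W by (rule E3_subspace)
  have UW: "U \<subseteq> W" unfolding U_def using vec.span_minimal[OF _ Wsub] by blast
  have inW: "a \<in> W" "b \<in> W" "c \<in> W" "a + b \<in> W" "a + c \<in> W" "b + c \<in> W" "a + b + c \<in> W"
    unfolding W E3_def by simp_all
  have hitU: "\<And>x y z. x \<in> W \<Longrightarrow> y \<in> W \<Longrightarrow> z \<in> W \<Longrightarrow> x + y + z \<in> W \<Longrightarrow>
      x \<noteq> 0 \<Longrightarrow> y \<noteq> 0 \<Longrightarrow> z \<noteq> 0 \<Longrightarrow> x + y \<noteq> 0 \<Longrightarrow> x + z \<noteq> 0 \<Longrightarrow> y + z \<noteq> 0 \<Longrightarrow> x + y + z \<noteq> 0 \<Longrightarrow>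
      x \<in> U \<or> y \<in> U \<or> z \<in> U \<or> x + y + z \<in> U"
  proof -
    fix x y z assume "x \<in> W" "y \<in> W" "z \<in> W" "x + y + z \<in> W"
      "x \<noteq> 0" "y \<noteq> 0" "z \<noteq> 0" "x + y \<noteq> 0" "x + z \<noteq> 0" "y + z \<noteq> 0" "x + y + z \<noteq> 0"
    then show "x \<in> U \<or> y \<in> U \<or> z \<in> U \<or> x + y + z \<in> U"
      using nf unfolding NF_def U_def using vec.span_base[of _ "S \<inter> W"] by blast
  qed
  have h1: "c \<in> U \<or> a + c \<in> U \<or> b + c \<in> U \<or> a + b + c \<in> U"
    using hitU[of "c" "a + c" "b + c"] nz inW by (simp add: ac_simps)
  have h2: "b \<in> U \<or> a + b \<in> U \<or> b + c \<in> U \<or> a + b + c \<in> U"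
    using hitU[of "b" "a + b" "b + c"] nz inW by (simp add: ac_simps)
  have h3: "a \<in> U \<or> a + b \<in> U \<or> a + c \<in> U \<or> a + b + c \<in> U"
    using hitU[of "a" "a + b" "a + c"] nz inW by (simp add: ac_simps)
  have h4: "b \<in> U \<or> c \<in> U \<or> a + b \<in> U \<or> a + c \<in> U"
    using hitU[of "b" "c" "a + b"] nz inW by (simp add: ac_simps)
  have h5: "a \<in> U \<or> c \<in> U \<or> a + b \<in> U \<or> b + c \<in> U"
    using hitU[of "a" "c" "a + b"] nz inW by (simp add: ac_simps)
  have h6: "a \<in> U \<or> b \<in> U \<or> a + c \<in> U \<or> b + c \<in> U"
    using hitU[of "a" "b" "a + c"] nz inW by (simp add: ac_simps)
  have h7: "a \<in> U \<or> b \<in> U \<or> c \<in> U \<or> a + b + c \<in> U"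
    using hitU[of "a" "b" "c"] nz inW by (simp add: ac_simps)
  have cl1: "a \<in> U \<Longrightarrow> b \<in> U \<Longrightarrow> a + b \<in> U"
    using vec.span_add[of "a" "S \<inter> W" "b"] unfolding U_def by (simp add: ac_simps)
  have cl2: "a \<in> U \<Longrightarrow> a + b \<in> U \<Longrightarrow> b \<in> U"
    using vec.span_add[of "a" "S \<inter> W" "a + b"] unfolding U_def by (simp add: ac_simps)
  have cl3: "b \<in> U \<Longrightarrow> a + b \<in> U \<Longrightarrow> a \<in> U"
    using vec.span_add[of "b" "S \<inter> W" "a + b"] unfolding U_def by (simp add: ac_simps)
  have cl4: "a \<in> U \<Longrightarrow> c \<in> U \<Longrightarrow> a + c \<in> U"
    using vec.span_add[of "a" "S \<inter> W" "c"] unfolding U_def by (simp add: ac_simps)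
  have cl5: "a \<in> U \<Longrightarrow> a + c \<in> U \<Longrightarrow> c \<in> U"
    using vec.span_add[of "a" "S \<inter> W" "a + c"] unfolding U_def by (simp add: ac_simps)
  have cl6: "c \<in> U \<Longrightarrow> a + c \<in> U \<Longrightarrow> a \<in> U"
    using vec.span_add[of "c" "S \<inter> W" "a + c"] unfolding U_def by (simp add: ac_simps)
  have cl7: "b \<in> U \<Longrightarrow> c \<in> U \<Longrightarrow> b + c \<in> U"
    using vec.span_add[of "b" "S \<inter> W" "c"] unfolding U_def by (simp add: ac_simps)
  have cl8: "b \<in> U \<Longrightarrow> b + c \<in> U \<Longrightarrow> c \<in> U"
    using vec.span_add[of "b" "S \<inter> W" "b + c"] unfolding U_def by (simp add: ac_simps)
  have cl9: "c \<in> U \<Longrightarrow> b + c \<in> U \<Longrightarrow> b \<in> U"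
    using vec.span_add[of "c" "S \<inter> W" "b + c"] unfolding U_def by (simp add: ac_simps)
  have cl10: "a \<in> U \<Longrightarrow> b + c \<in> U \<Longrightarrow> a + b + c \<in> U"
    using vec.span_add[of "a" "S \<inter> W" "b + c"] unfolding U_def by (simp add: ac_simps)
  have cl11: "a \<in> U \<Longrightarrow> a + b + c \<in> U \<Longrightarrow> b + c \<in> U"
    using vec.span_add[of "a" "S \<inter> W" "a + b + c"] unfolding U_def by (simp add: ac_simps)
  have cl12: "b + c \<in> U \<Longrightarrow> a + b + c \<in> U \<Longrightarrow> a \<in> U"
    using vec.span_add[of "b + c" "S \<inter> W" "a + b + c"] unfolding U_def by (simp add: ac_simps)
  have cl13: "b \<in> U \<Longrightarrow> a + c \<in> U \<Longrightarrow> a + b + c \<in> U"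
    using vec.span_add[of "b" "S \<inter> W" "a + c"] unfolding U_def by (simp add: ac_simps)
  have cl14: "b \<in> U \<Longrightarrow> a + b + c \<in> U \<Longrightarrow> a + c \<in> U"
    using vec.span_add[of "b" "S \<inter> W" "a + b + c"] unfolding U_def by (simp add: ac_simps)
  have cl15: "a + c \<in> U \<Longrightarrow> a + b + c \<in> U \<Longrightarrow> b \<in> U"
    using vec.span_add[of "a + c" "S \<inter> W" "a + b + c"] unfolding U_def by (simp add: ac_simps)
  have cl16: "c \<in> U \<Longrightarrow> a + b \<in> U \<Longrightarrow> a + b + c \<in> U"
    using vec.span_add[of "c" "S \<inter> W" "a + b"] unfolding U_def by (simp add: ac_simps)
  have cl17: "c \<in> U \<Longrightarrow> a + b + c \<in> U \<Longrightarrow> a + b \<in> U"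
    using vec.span_add[of "c" "S \<inter> W" "a + b + c"] unfolding U_def by (simp add: ac_simps)
  have cl18: "a + b \<in> U \<Longrightarrow> a + b + c \<in> U \<Longrightarrow> c \<in> U"
    using vec.span_add[of "a + b" "S \<inter> W" "a + b + c"] unfolding U_def by (simp add: ac_simps)
  have cl19: "a + b \<in> U \<Longrightarrow> a + c \<in> U \<Longrightarrow> b + c \<in> U"
    using vec.span_add[of "a + b" "S \<inter> W" "a + c"] unfolding U_def by (simp add: ac_simps)
  have cl20: "a + b \<in> U \<Longrightarrow> b + c \<in> U \<Longrightarrow> a + c \<in> U"
    using vec.span_add[of "a + b" "S \<inter> W" "b + c"] unfolding U_def by (simp add: ac_simps)
  have cl21: "a + c \<in> U \<Longrightarrow> b + c \<in> U \<Longrightarrow> a + b \<in> U"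
    using vec.span_add[of "a + c" "S \<inter> W" "b + c"] unfolding U_def by (simp add: ac_simps)
  have "a \<in> U \<and> b \<in> U \<and> c \<in> U"
    by (rule fano[OF h1 h2 h3 h4 h5 h6 h7 cl1 cl2 cl3 cl4 cl5 cl6 cl7 cl8 cl9 cl10 cl11 cl12 cl13 cl14 cl15 cl16 cl17 cl18 cl19 cl20 cl21])
  then have "vec.span {a,b,c} \<subseteq> U" unfolding U_def by (intro vec.span_minimal) auto
  then have "W \<subseteq> U" unfolding W span3 .
  then show "vec.span (S \<inter> W) = W" using UW unfolding U_def by blast
qed

lemma claimA: "S \<subseteq> pg_points \<Longrightarrow> strong_blocking_set S \<longleftrightarrow> NF S"
  using A1 A2 by blast



definition mk :: "bit \<Rightarrow> bit \<Rightarrow> bit \<Rightarrow> bit \<Rightarrow> pt" where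
  "mk a b c d = (\<chi> i. if i = 0 then a else if i = 1 then b else if i = 2 then c else d)"

lemma idx4: "(0::4) \<noteq> 1" "(0::4) \<noteq> 2" "(0::4) \<noteq> 3" "(1::4) \<noteq> 2" "(1::4) \<noteq> 3" "(2::4) \<noteq> 3"
  "(4::4) = 0"
  by simp_all

lemma mk_nth [simp]: "mk a b c d $ 0 = a" "mk a b c d $ 1 = b" "mk a b c d $ 2 = c" "mk a b c d $ 3 = d"
  by (simp_all add: mk_def)

lemma all4: "(\<forall>i::4. P i) \<longleftrightarrow> P 0 \<and> P 1 \<and> P 2 \<and> P 3"
  unfolding forall_4 idx4(7) by blast

lemma mk_eta: "x = mk (x$0) (x$1) (x$2) (x$3)"
  by (simp add: vec_eq_iff all4)

lemma mk_add [simp]: "mk a b c d + mk a' b' c' d' = mk (a+a') (b+b') (c+c') (d+d')"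
  by (simp add: vec_eq_iff all4)

lemma mk_eq [simp]: "mk a b c d = mk a' b' c' d' \<longleftrightarrow> a = a' \<and> b = b' \<and> c = c' \<and> d = d'"
  by (simp add: vec_eq_iff all4)

lemma zero_mk: "(0::pt) = mk 0 0 0 0"
  by (simp add: vec_eq_iff all4)

lemma mk_eq0 [simp]: "mk a b c d = 0 \<longleftrightarrow> a = 0 \<and> b = 0 \<and> c = 0 \<and> d = 0"
  by (simp add: zero_mk)

lemma hyp_mk [simp]: "hyp_form (mk a b c d) = a * b + c * d"
  by (simp add: hyp_form_def)

lemma UNIV_bit: "(UNIV :: bit set) = {0, 1}"
  using bit_cases2 by auto

lemma card_pg: "card pg_points = 15"
proof -
  have "CARD(bit) = 2" by (simp add: UNIV_bit)
  then have "CARD(pt) = 16" by simp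
  then show ?thesis unfolding pg_points_def by (simp add: card_Diff_singleton)
qed

lemma mk_cases: "(\<And>a b c d. P (mk a b c d)) \<Longrightarrow> P x"
  by (metis mk_eta)

lemma bitE: "((c::bit) = 0 \<Longrightarrow> P) \<Longrightarrow> (c = 1 \<Longrightarrow> P) \<Longrightarrow> P"
  using bit_cases2 by blast

definition S0 :: "pt set" where "S0 = {x \<in> pg_points. hyp_form x = 0}"
definition C0 :: "pt set" where "C0 = {mk 1 1 1 0, mk 1 1 0 1, mk 0 0 1 1, mk 1 1 0 0, mk 1 0 1 1, mk 0 1 1 1}"

lemma S0_explicit: "S0 = {mk 1 0 0 0, mk 0 1 0 0, mk 0 0 1 0, mk 0 0 0 1, mk 1 0 1 0, mk 1 0 0 1, mk 0 1 1 0, mk 0 1 0 1, mk 1 1 1 1}"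
proof -
  have "x \<in> S0 \<longleftrightarrow> x \<in> {mk 1 0 0 0, mk 0 1 0 0, mk 0 0 1 0, mk 0 0 0 1, mk 1 0 1 0, mk 1 0 0 1, mk 0 1 1 0, mk 0 1 0 1, mk 1 1 1 1}" for x
    apply (rule mk_cases[of _ x])
    subgoal for a b c d
      by (rule bitE[of a]; rule bitE[of b]; rule bitE[of c]; rule bitE[of d]) (simp_all add: S0_def pg_points_def)
    done
  then show ?thesis by blast
qed

lemma card_S0: "card S0 = 9"
  unfolding S0_explicit by simp

lemma C0_iff: "y \<noteq> 0 \<Longrightarrow> y \<in> C0 \<longleftrightarrow> hyp_form y = 1"
    apply (rule mk_cases[of _ y])
    subgoal for a b c d
      by (rule bitE[of a]; rule bitE[of b]; rule bitE[of c]; rule bitE[of d]) (simp_all add: C0_def)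
    done

lemma C0_noaff: "x \<in> C0 \<Longrightarrow> y \<in> C0 \<Longrightarrow> z \<in> C0 \<Longrightarrow> x \<noteq> y \<Longrightarrow> x \<noteq> z \<Longrightarrow> y \<noteq> z \<Longrightarrow> x + y + z \<in> C0 \<Longrightarrow> False"
  unfolding C0_def by auto



lemma Bback:
  assumes inv: "invertible A" and S: "S = {x \<in> pg_points. hyp_form (A *v x) = 0}"
  shows "S \<subseteq> pg_points \<and> card S = 9 \<and> NF S"
proof -
  obtain A' where AA': "A ** A' = mat 1" "A' ** A = mat 1" using inv unfolding invertible_def by blast
  have i1: "A' *v (A *v x) = x" for x
    by (simp add: matrix_vector_mul_assoc AA')
  have i2: "A *v (A' *v x) = x" for x
    by (simp add: matrix_vector_mul_assoc AA')
  have lin: "A *v (x + y) = A *v x + A *v y" for x y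
    by (simp add: matrix_vector_right_distrib)
  have z: "A *v x = 0 \<longleftrightarrow> x = 0" for x
    by (metis i1 matrix_vector_mult_0_right)
  have inj: "inj ((*v) A)" by (metis i1 injI)
  have img: "(*v) A ` S = S0"
  proof
    show "(*v) A ` S \<subseteq> S0"
    proof
      fix y assume "y \<in> (*v) A ` S"
      then obtain x where x: "x \<in> S" "y = A *v x" by blast
      then have "x \<noteq> 0" "hyp_form y = 0" unfolding S pg_points_def by auto
      then show "y \<in> S0" unfolding S0_def pg_points_def using z x(2) by simp
    qed
    show "S0 \<subseteq> (*v) A ` S"
    proof
      fix y assume "y \<in> S0"
      then have y: "y \<noteq> 0" "hyp_form y = 0" unfolding S0_def pg_points_def by auto
      have "A' *v y \<noteq> 0" using i2 y(1) by (metis matrix_vector_mult_0_right)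
      then have "A' *v y \<in> S" unfolding S pg_points_def using y(2) by (simp add: i2)
      then show "y \<in> (*v) A ` S" using i2 by (metis image_eqI)
    qed
  qed
  have card: "card S = 9"
    using card_image[OF inj_on_subset[OF inj subset_UNIV, of S]] img card_S0 by simp
  have inC0: "A *v x \<in> C0" if "x \<noteq> 0" "x \<notin> S" for x
  proof -
    have "hyp_form (A *v x) = 1" using that unfolding S pg_points_def by auto
    then show ?thesis using C0_iff z that by blast
  qed
  have nf: "NF S"
    unfolding NF_def
  proof (intro allI impI, rule ccontr)
    fix a b c :: pt
    assume nz: "a \<noteq> 0" "b \<noteq> 0" "c \<noteq> 0" "a + b \<noteq> 0" "a + c \<noteq> 0" "b + c \<noteq> 0" "a + b + c \<noteq> 0"
      and ns: "\<not> (a \<in> S \<or> b \<in> S \<or> c \<in> S \<or> a + b + c \<in> S)"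
    have ab: "a \<noteq> b" "a \<noteq> c" "b \<noteq> c" using nz(4,5,6) by auto
    have d: "A *v a \<noteq> A *v b" "A *v a \<noteq> A *v c" "A *v b \<noteq> A *v c"
      using ab i1 by metis+
    have m: "A *v a \<in> C0" "A *v b \<in> C0" "A *v c \<in> C0" "A *v (a + b + c) \<in> C0"
      using inC0 nz ns by blast+
    have e: "A *v a + A *v b + A *v c \<in> C0" using m(4) unfolding lin .
    show False
      using C0_noaff[OF m(1,2,3) d e] .
  qed
  show ?thesis using card nf unfolding S by auto
qed



lemma fin_pt [simp]: "finite (A :: pt set)"
proof -
  have "finite (pg_points)" using card_pg by (intro card_ge_0_finite) simp
  then have "finite (insert 0 pg_points)" by simp
  moreover have "insert 0 pg_points = UNIV" unfolding pg_points_def by auto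
  ultimately have "finite (UNIV :: pt set)" by simp
  then show ?thesis using finite_subset[OF subset_UNIV] by blast
qed

lemma neq_sum: "(x::pt) \<noteq> y \<Longrightarrow> x + y \<noteq> 0"
  using eq_iff_sum0 by blast

lemma NF_C:
  assumes nf: "NF S" and m: "u \<in> pg_points - S" "v \<in> pg_points - S" "w \<in> pg_points - S" "u + v + w \<in> pg_points - S"
    and d: "u \<noteq> v" "u \<noteq> w" "v \<noteq> w"
  shows False
proof -
  have "u \<noteq> 0" "v \<noteq> 0" "w \<noteq> 0" "u + v + w \<noteq> 0" using m unfolding pg_points_def by auto
  moreover have "u + v \<noteq> 0" "u + w \<noteq> 0" "v + w \<noteq> 0" using d neq_sum by auto
  ultimately have "u \<in> S \<or> v \<in> S \<or> w \<in> S \<or> u + v + w \<in> S" using nf unfolding NF_def by blast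
  then show False using m by blast
qed

lemma pair_lemma:
  assumes nf: "NF S" and m: "x \<in> pg_points - S" "y \<in> pg_points - S" "x' \<in> pg_points - S" "y' \<in> pg_points - S"
    and d: "x \<noteq> y" "x' \<noteq> y'" and e: "x + y = x' + y'"
  shows "{x, y} = {x', y'}"
proof (rule ccontr)
  assume ne: "{x, y} \<noteq> {x', y'}"
  have d2: "x \<noteq> x'" "x \<noteq> y'" "y \<noteq> x'" "y \<noteq> y'"
  proof -
    show "x \<noteq> x'" using ne e by auto
    show "y \<noteq> y'" using ne e by auto
    show "x \<noteq> y'" using ne e by (auto simp: add.commute)
    show "y \<noteq> x'" using ne e by (auto simp: add.commute)
  qed
  have "x + y + x' = y'" using e by (simp add: ac_simps)
  then show False using NF_C[OF nf m(1,2,3)] m(4) d d2 by simp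
qed

lemma surj_pairs:
  assumes sub: "S \<subseteq> pg_points" and c9: "card S = 9" and nf: "NF S" and z: "z \<in> pg_points"
  shows "\<exists>x \<in> pg_points - S. \<exists>y \<in> pg_points - S. x \<noteq> y \<and> x + y = z"
proof -
  define C where "C = pg_points - S"
  have fin: "finite C" by simp
  have c6: "card C = 6" unfolding C_def using card_Diff_subset[OF _ sub] card_pg c9
    by (simp add: finite_subset)
  define P where "P = {B. B \<subseteq> C \<and> card B = 2}"
  have cP: "card P = 15" unfolding P_def using n_subsets[OF fin, of 2] c6 by (simp add: choose_two)
  have inj: "inj_on Sum P"
  proof (rule inj_onI)
    fix B1 B2 assume b: "B1 \<in> P" "B2 \<in> P" "Sum B1 = Sum B2"
    obtain x y where xy: "B1 = {x, y}" "x \<noteq> y" using b(1) unfolding P_def card_2_iff by blast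
    obtain x' y' where xy': "B2 = {x', y'}" "x' \<noteq> y'" using b(2) unfolding P_def card_2_iff by blast
    have "x + y = x' + y'" using b(3) xy xy' by simp
    moreover have "x \<in> C" "y \<in> C" "x' \<in> C" "y' \<in> C" using b xy xy' unfolding P_def by auto
    ultimately show "B1 = B2" using pair_lemma[OF nf] xy xy' unfolding C_def by blast
  qed
  have sub2: "Sum ` P \<subseteq> pg_points"
  proof
    fix w assume "w \<in> Sum ` P"
    then obtain B where "B \<in> P" "w = Sum B" by blast
    then obtain x y where "B = {x, y}" "x \<noteq> y" "w = Sum B" unfolding P_def card_2_iff by blast
    then show "w \<in> pg_points" using neq_sum unfolding pg_points_def by simp
  qed
  have "card (Sum ` P) = 15" using card_image[OF inj] cP by simp
  then have "Sum ` P = pg_points" using card_subset_eq[OF _ sub2] card_pg by simp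
  then obtain B where "B \<in> P" "z = Sum B" using z by blast
  then obtain x y where "B = {x, y}" "x \<noteq> y" "z = x + y" "x \<in> C" "y \<in> C" unfolding P_def card_2_iff by auto
  then show ?thesis unfolding C_def by blast
qed



lemma sum3_eq: "(a + b + c = (0::pt)) \<longleftrightarrow> a + b = c"
  using eq_iff_sum0[of "a + b" c] by simp

lemma structure6:
  assumes sub: "S \<subseteq> pg_points" and c9: "card S = 9" and nf: "NF S"
  obtains p q x y where "pg_points - S = {p, q, p + q, x, y, x + y}"
    "p \<noteq> 0" "q \<noteq> 0" "x \<noteq> 0" "y \<noteq> 0" "p + q \<noteq> 0" "p + x \<noteq> 0" "p + y \<noteq> 0" "q + x \<noteq> 0"
    "q + y \<noteq> 0" "x + y \<noteq> 0" "p + q + x \<noteq> 0" "p + q + y \<noteq> 0" "p + x + y \<noteq> 0" "q + x + y \<noteq> 0"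
    "p + q + x + y \<noteq> 0"
proof -
  define C where "C = pg_points - S"
  have c6: "card C = 6" unfolding C_def using card_Diff_subset[OF _ sub] card_pg c9 by simp
  have Cpg: "C \<subseteq> pg_points" unfolding C_def by blast
  have nzC: "u \<in> C \<Longrightarrow> u \<noteq> 0" for u using Cpg unfolding pg_points_def by blast
  have surj: "\<exists>u\<in>C. \<exists>v\<in>C. u \<noteq> v \<and> u + v = z" if "z \<in> C" for z
    using surj_pairs[OF sub c9 nf] that Cpg unfolding C_def by blast
  have nfc: "False" if "u \<in> C" "v \<in> C" "w \<in> C" "u + v + w \<in> C" "u \<noteq> v" "u \<noteq> w" "v \<noteq> w" for u v w
    using NF_C[OF nf] that unfolding C_def by blast
  obtain p where p: "p \<in> C" using c6 by fastforce
  obtain q y0 where qy0: "q \<in> C" "y0 \<in> C" "q \<noteq> y0" "q + y0 = p" using surj[OF p] by blast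
  have y0: "y0 = p + q" using qy0(4) by (auto simp: ac_simps)
  have pnq: "p \<noteq> q"
  proof
    assume "p = q"
    then have "y0 = 0" using y0 by simp
    then show False using nzC qy0(2) by blast
  qed
  have pq: "p + q \<in> C" using qy0 y0 by simp
  have pn0: "p \<noteq> 0" "q \<noteq> 0" using nzC p qy0 by auto
  have pqd: "p + q \<noteq> p" "p + q \<noteq> q" using pn0 by (simp_all add: add.commute)
  define T where "T = {p, q, p + q}"
  have TC: "T \<subseteq> C" unfolding T_def using p qy0 pq by simp
  have cT: "card T = 3" unfolding T_def using pnq pqd by auto
  define R where "R = C - T"
  have cR: "card R = 3" unfolding R_def using card_Diff_subset[OF _ TC] c6 cT by simp
  obtain r where r: "r \<in> R" using cR by fastforce
  have rC: "r \<in> C" "r \<notin> T" using r unfolding R_def by auto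
  obtain x y where xy: "x \<in> C" "y \<in> C" "x \<noteq> y" "x + y = r" using surj[OF rC(1)] by blast
  have key: "u \<notin> T" if uv: "u \<in> C" "v \<in> C" "u \<noteq> v" "u + v = r" for u v
  proof
    assume uT: "u \<in> T"
    show False
    proof (cases "v \<in> T")
      case True
      then have "r \<in> T" using uT uv unfolding T_def by (auto simp: ac_simps)
      then show False using rC by blast
    next
      case False
      then have vd: "v \<noteq> p" "v \<noteq> q" "v \<noteq> p + q" unfolding T_def by auto
      from uT consider "u = p" | "u = q" | "u = p + q" unfolding T_def by blast
      then show False
      proof cases
        case 1
        have "q + (p + q) + v = r" using 1 uv by (simp add: ac_simps)
        then show False using nfc[of q "p + q" v] qy0 pq uv rC vd pqd by auto
      next
        case 2
        have "p + (p + q) + v = r" using 2 uv by (simp add: ac_simps)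
        then show False using nfc[of p "p + q" v] p pq uv rC vd pqd by auto
      next
        case 3
        have "p + q + v = r" using 3 uv by (simp add: ac_simps)
        then show False using nfc[of p q v] p qy0 uv rC vd pnq by auto
      qed
    qed
  qed
  have xT: "x \<notin> T" using key xy by blast
  have yT: "y \<notin> T" using key[of y x] xy by (simp add: add.commute)
  have xR: "x \<in> R" "y \<in> R" using xT yT xy unfolding R_def by auto
  have xn0: "x \<noteq> 0" "y \<noteq> 0" using nzC xy by auto
  have xrd: "x \<noteq> x + y" "y \<noteq> x + y" using xn0 by (simp_all add: add.commute)
  have "{x, y, x + y} \<subseteq> R" using xR r xy by simp
  moreover have "card {x, y, x + y} = 3" using xy xrd by auto
  ultimately have R3: "R = {x, y, x + y}" using card_subset_eq[of R "{x, y, x + y}"] cR by simp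
  have Ceq: "C = {p, q, p + q, x, y, x + y}"
  proof -
    have "C = T \<union> R" unfolding R_def using TC by blast
    then show ?thesis unfolding T_def R3 by auto
  qed
  have TR: "T \<inter> R = {}" unfolding R_def by blast
  have dd: "p \<noteq> x" "p \<noteq> y" "q \<noteq> x" "q \<noteq> y"
    using TR R3 unfolding T_def by auto
  have s3: "p + q \<noteq> x" "p + q \<noteq> y" "x + y \<noteq> p" "x + y \<noteq> q"
    using TR R3 unfolding T_def by auto
  have t1: "p + q + x \<noteq> 0" "p + q + y \<noteq> 0" "x + y + p \<noteq> 0" "x + y + q \<noteq> 0"
    using s3 unfolding sum3_eq .
  have t2: "p + x + y \<noteq> 0" "q + x + y \<noteq> 0" using t1(3,4) by (simp_all add: ac_simps)
  have t4: "p + q + x + y \<noteq> 0"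
  proof
    assume "p + q + x + y = 0"
    then have "p + q + x = y" using eq_iff_sum0[of "p + q + x" y] by simp
    then show False using nfc[of p q x] p qy0 xy dd pnq by auto
  qed
  show ?thesis
    apply (rule that[of p q x y])
    using Ceq pn0 xn0 pnq dd xy t1 t2 t4 neq_sum unfolding C_def by auto
qed



lemma Bfwd:
  assumes sub: "S \<subseteq> pg_points" and c9: "card S = 9" and nf: "NF S"
  shows "hyperbolic_quadric S"
proof -
  obtain p q r s where Ceq: "pg_points - S = {p, q, p + q, r, s, r + s}"
    and nz: "p \<noteq> 0" "q \<noteq> 0" "r \<noteq> 0" "s \<noteq> 0" "p + q \<noteq> 0" "p + r \<noteq> 0" "p + s \<noteq> 0" "q + r \<noteq> 0"
    "q + s \<noteq> 0" "r + s \<noteq> 0" "p + q + r \<noteq> 0" "p + q + s \<noteq> 0" "p + r + s \<noteq> 0" "q + r + s \<noteq> 0"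
    "p + q + r + s \<noteq> 0"
    using structure6[OF sub c9 nf] by blast
  define col :: "4 \<Rightarrow> pt" where "col j = (if j = 0 then p + q + s else if j = 1 then p + q + r + s
      else if j = 2 then r + p else r + q)" for j
  define B :: "bit^4^4" where "B = (\<chi> i j. col j $ i)"
  have Bmk: "B *v mk a b c d = a *s (p + q + s) + b *s (p + q + r + s) + c *s (r + p) + d *s (r + q)" for a b c d
    by (simp add: vec_eq_iff matrix_vector_mult_def sum_4 idx4 B_def col_def algebra_simps del: add_bit_eq_xor mult_bit_eq_and)
  have ker0: "B *v mk a b c d = 0 \<Longrightarrow> mk a b c d = 0" for a b c d
    apply (insert nz)
    apply (rule bitE[of a]; rule bitE[of b]; rule bitE[of c]; rule bitE[of d])
    apply (simp_all add: Bmk ac_simps)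
    done
  have ker: "v = 0" if "B *v v = 0" for v
    using ker0[of "v$0" "v$1" "v$2" "v$3"] mk_eta[of v] that by metis
  have "\<exists>A. A ** B = mat 1" using ker matrix_left_invertible_ker by blast
  then obtain A where AB: "A ** B = mat 1" by blast
  then have BA: "B ** A = mat 1" using matrix_left_right_inverse by blast
  have invA: "invertible A" unfolding invertible_def using AB BA by blast
  have i1: "A *v (B *v v) = v" for v by (simp add: matrix_vector_mul_assoc AB)
  have i2: "B *v (A *v v) = v" for v by (simp add: matrix_vector_mul_assoc BA)
  have img: "(*v) B ` C0 = pg_points - S"
    unfolding Ceq C0_def by (simp add: Bmk ac_simps)
  have "S = {z \<in> pg_points. hyp_form (A *v z) = 0}"
  proof (intro set_eqI iffI)
    fix z assume zS: "z \<in> S"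
    have z0: "z \<noteq> 0" using zS sub unfolding pg_points_def by blast
    have w0: "A *v z \<noteq> 0" using i2[of z] z0 by (metis matrix_vector_mult_0_right)
    have "A *v z \<notin> C0"
    proof
      assume "A *v z \<in> C0"
      then have "B *v (A *v z) \<in> pg_points - S" using img by blast
      then show False using zS i2 by simp
    qed
    then have "hyp_form (A *v z) = 0" using C0_iff[OF w0] by simp
    then show "z \<in> {z \<in> pg_points. hyp_form (A *v z) = 0}" using zS sub by blast
  next
    fix z assume z: "z \<in> {z \<in> pg_points. hyp_form (A *v z) = 0}"
    have z0: "z \<noteq> 0" using z unfolding pg_points_def by blast
    have w0: "A *v z \<noteq> 0" using i2[of z] z0 by (metis matrix_vector_mult_0_right)
    have "A *v z \<notin> C0" using C0_iff[OF w0] z by simp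
    moreover have "z \<notin> pg_points - S \<or> A *v z \<in> C0"
    proof (cases "z \<in> pg_points - S")
      case True
      then obtain w where "w \<in> C0" "z = B *v w" using img by blast
      then show ?thesis using i1 by simp
    qed simp
    ultimately show "z \<in> S" using z by blast
  qed
  then show ?thesis unfolding hyperbolic_quadric_def using invA by blast
qed


theorem theorem2p3:
  fixes S :: "pt set"
  shows "(strong_blocking_set S \<and> card S = 9) \<longleftrightarrow> hyperbolic_quadric S"
proof
  assume h: "strong_blocking_set S \<and> card S = 9"
  then have "S \<subseteq> pg_points" unfolding strong_blocking_set_def by blast
  moreover have "NF S" using A1 h by blast
  ultimately show "hyperbolic_quadric S" using Bfwd h by blast
next
  assume "hyperbolic_quadric S"
  then obtain A :: "bit^4^4" where "invertible A" "S = {x \<in> pg_points. hyp_form (A *v x) = 0}"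
    unfolding hyperbolic_quadric_def by blast
  then have "S \<subseteq> pg_points \<and> card S = 9 \<and> NF S" by (rule Bback)
  then show "strong_blocking_set S \<and> card S = 9" using claimA by blast
qed

end
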